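(* Let $\mathbf{M}=S^{s-1}=\{x\in\mathbf{R}^s:\|x\|=1\}$, whose cutlocus is $\mathbf{C}=\{0\}$ and nearest-point map is $\pi(t)=t/\|t\|$ ($t\neq0$); here $m=s-1$. Let $(t_n)$ in $\mathbf{R}^s$, random vectors $\tilde t_n$ in $\mathbf{R}^s$, and nonsingular $s\times s$ matrices $B_n\to0$ with $Z_n=B_n^{-1}(\tilde t_n-t_n)\xrightarrow{\mathcal D}Z$. Assume $t_n\neq0$, $d(t_n,\mathbf{M})\le D$ for all $n$, and $\|B_n\|/\|t_n\|\to0$. Put $\mu_n=\pi(t_n)$, $\tilde\mu_n=\pi(\tilde t_n)$ and $$G_n=\|t_n\|\tan_{\mu_n}+\varepsilon_n(\mathrm{I}_s-\tan_{\mu_n}),$$ where $\varepsilon_n=O(\|t_n\|)$ (in particular one may take $\varepsilon_n=\|t_n\|$, giving $G_n=\|t_n\|\mathrm{I}_s$). Let $\Gamma_n$ be $s\times s$ matrices with $$\|\Gamma_n\|\,\|B_n\|^2/\|t_n\|\to0.$$ Then: (1) $\Gamma_nG_n(\tilde\mu_n-\mu_n)-(\Gamma_n\tan_{\mu_n}B_n)Z_n\to0$ in probability. If moreover $Z$ is spherical and $\Gamma_n\tan_{\mu_n}B_nB_n^T\tan_{\mu_n}\Gamma_n^T=\tan_{\mu_n}$ for all $n$, then (2) if $\mu_n\to\mu\in\mathbf{M}$, $\Gamma_nG_n(\tilde\mu_n-\mu_n)=(\Gamma_n\tan_{\mu_n}B_n)Z_n+o_P(1)\xrightarrow{\mathcal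 D}\tan_\mu Z$; and (3) $(\tilde\mu_n-\mu_n)^TG_n\Gamma_n^T\Gamma_nG_n(\tilde\mu_n-\mu_n)\xrightarrow{\mathcal D}\zeta_{s-1}^2$.
   Context: $\|\cdot\|$: Euclidean norm / operator norm; $d(t,\mathbf{M})=\inf_{x\in\mathbf{M}}\|t-x\|$. For $\mu\in S^{s-1}$, $\tan_\mu=\mathrm{I}_s-\mu\mu^T$ is the orthogonal projection onto the tangent space $T_\mu S^{s-1}=\mu^\perp$. $Z$ spherical: $HZ\overset{\mathcal D}{=}Z$ for all orthogonal $s\times s$ matrices $H$; $\zeta_{m}^2$ is the distribution of $\sum_{i=1}^{m}Z_i^2$ for $Z=(Z_1,\dots,Z_s)$. $o_P(1)$: term tending to $0$ in probability. *)

theory Defs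
  imports "HOL-Probability.Probability" "HOL-Library.Landau_Symbols"
begin

text \<open>Nearest-point map of the unit sphere (value at the cut locus 0 is 0, irrelevant).\<close>
definition sph_proj :: "real^'n \<Rightarrow> real^'n" where
  "sph_proj t = (1 / norm t) *\<^sub>R t"

definition outer :: "real^'n \<Rightarrow> real^'n \<Rightarrow> real^'n^'n" where
  "outer u v = (\<chi> i j. u $ i * v $ j)"

definition tanproj :: "real^'n \<Rightarrow> real^'n^'n" where
  "tanproj mu = mat 1 - outer mu mu"

definition opnorm :: "real^'n^'m \<Rightarrow> real" where
  "opnorm A = onorm (\<lambda>x. A *v x)"

definition conv_distr ::
  "(nat \<Rightarrow> 'a measure) \<Rightarrow> (nat \<Rightarrow> 'a \<Rightarrow> 'b::topological_space) \<Rightarrow> 'b measure \<Rightarrow> bool" where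
  "conv_distr M X L \<longleftrightarrow>
     (\<forall>f :: 'b \<Rightarrow> real. continuous_on UNIV f \<and> bounded (range f) \<longrightarrow>
        (\<lambda>n. \<integral>\<omega>. f (X n \<omega>) \<partial>M n) \<longlonglongrightarrow> (\<integral>x. f x \<partial>L))"

definition conv_prob_zero ::
  "(nat \<Rightarrow> 'a measure) \<Rightarrow> (nat \<Rightarrow> 'a \<Rightarrow> 'b::real_normed_vector) \<Rightarrow> bool" where
  "conv_prob_zero M Y \<longleftrightarrow>
     (\<forall>e>0. (\<lambda>n. measure (M n) {\<omega> \<in> space (M n). norm (Y n \<omega>) > e}) \<longlonglongrightarrow> 0)"

definition spherical :: "(real^'n) measure \<Rightarrow> bool" where
  "spherical L \<longleftrightarrow> (\<forall>H::real^'n^'n. orthogonal_matrix H \<longrightarrow> distr L borel (\<lambda>z. H *v z) = L)"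

text \<open>zeta^2_{s-1}: law of the sum of squares of the first s-1 coordinates
  (coordinates ordered by the well-order on the index type; the last one is Max UNIV).\<close>
definition zeta2_last_dropped :: "(real^'n::{finite,wellorder}) measure \<Rightarrow> real measure" where
  "zeta2_last_dropped L = distr L borel (\<lambda>z. \<Sum>i\<in>UNIV - {Max UNIV}. (z $ i)\<^sup>2)"

end

theory Submission
  imports Defs
begin


lemma outer_mult_vec: "outer u v *v x = (v \<bullet> x) *\<^sub>R u"
  by (simp add: outer_def matrix_vector_mult_def vec_eq_iff inner_vec_def sum_distrib_left algebra_simps)

lemma tanproj_vec: "tanproj mu *v x = x - (mu \<bullet> x) *\<^sub>R mu"
  by (simp add: tanproj_def matrix_vector_mult_diff_rdistrib outer_mult_vec)

lemma transpose_outer: "transpose (outer u v) = outer v u"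
  by (simp add: outer_def transpose_def vec_eq_iff mult.commute)

lemma transpose_tanproj: "transpose (tanproj mu) = tanproj mu"
  by (simp add: tanproj_def transpose_outer vec_eq_iff transpose_def outer_def mat_def)

lemma norm_tanproj_sq: "norm mu = 1 \<Longrightarrow> norm (tanproj mu *v x)^2 = norm x ^2 - (mu \<bullet> x)^2"
proof -
  assume h: "norm mu = 1"
  hence m: "mu \<bullet> mu = 1" by (simp add: power2_norm_eq_inner[symmetric])
  have "norm (tanproj mu *v x)^2 = (x - (mu \<bullet> x) *\<^sub>R mu) \<bullet> (x - (mu \<bullet> x) *\<^sub>R mu)"
    by (simp add: tanproj_vec power2_norm_eq_inner)
  also have "\<dots> = x \<bullet> x - 2 * (mu \<bullet> x) * (mu \<bullet> x) + (mu \<bullet> x)^2 * (mu \<bullet> mu)"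
    by (simp add: inner_diff_left inner_diff_right inner_commute power2_eq_square algebra_simps)
  also have "\<dots> = norm x ^2 - (mu \<bullet> x)^2" using m by (simp add: dot_square_norm power2_eq_square)
  finally show ?thesis .
qed

lemma norm_tanproj_le: "norm mu = 1 \<Longrightarrow> norm (tanproj mu *v x) \<le> norm x"
proof -
  assume h: "norm mu = 1"
  have "norm (tanproj mu *v x)^2 \<le> norm x ^2" using norm_tanproj_sq[OF h, of x] by simp
  thus ?thesis using power2_le_imp_le norm_ge_zero by blast
qed

lemma tanproj_mu: "norm mu = 1 \<Longrightarrow> tanproj mu *v mu = 0"
  by (simp add: tanproj_vec power2_norm_eq_inner[symmetric])

lemma tanproj_idem: "norm mu = 1 \<Longrightarrow> tanproj mu *v (tanproj mu *v x) = tanproj mu *v x"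
  by (simp add: tanproj_vec inner_diff_right power2_norm_eq_inner[symmetric])


lemma norm_sph_proj_le: "norm (sph_proj w) \<le> 1"
  by (cases "w = 0") (simp_all add: sph_proj_def)

lemma aux1: "(x::real) \<ge> 1/2 \<Longrightarrow> 1 + 1 + x \<le> 10 * x^2"
proof -
  assume h: "x \<ge> 1/2"
  have "x*x \<ge> x*(1/2)" using h by (intro mult_left_mono) auto
  hence "10*x^2 \<ge> 5*x" by (simp add: power2_eq_square)
  thus ?thesis using h by linarith
qed

lemma aux2: "\<bar>(r::real) - 1\<bar> \<le> n \<Longrightarrow> (r-1)^2 \<le> n^2"
  by (metis abs_ge_zero power2_abs power_mono)

lemma aux3: assumes "(r::real) \<ge> 1/2" "r \<le> 3/2" "(r-1)^2 \<le> q"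
  shows "\<bar>((r-1)^2*(r+2) - r*q) / (2*r)\<bar> \<le> 5 * q"
proof -
  have q0: "q \<ge> 0" using assms(3) by (smt (verit) zero_le_power2)
  have "(r-1)^2*(r+2) \<ge> 0" "r*q \<ge> 0" using assms q0 by auto
  hence "\<bar>(r-1)^2*(r+2) - r*q\<bar> \<le> (r-1)^2*(r+2) + r*q" by linarith
  also have "\<dots> \<le> q * (7/2) + (3/2) * q" using assms q0
    by (intro add_mono mult_mono) auto
  also have "\<dots> \<le> 5 * q * (2*r)"
  proof -
    have "q*1 \<le> q*(2*r)" using assms q0 by (intro mult_left_mono) auto
    thus ?thesis by (simp add: algebra_simps)
  qed
  finally have "\<bar>(r-1)^2*(r+2) - r*q\<bar> \<le> 5 * q * (2*r)" .
  thus ?thesis using assms by (simp add: abs_divide pos_divide_le_eq)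
qed

lemma aux4: assumes "(r::real) \<ge> 1/2" "\<bar>r - 1\<bar> \<le> n"
  shows "\<bar>1/r - 1\<bar> * n \<le> 2 * n^2"
proof -
  have "\<bar>1/r - 1\<bar> = \<bar>1 - r\<bar> / r" using assms by (simp add: field_simps)
  also have "\<dots> \<le> 2 * n"
  proof -
    have n0: "n \<ge> 0" using assms(2) by linarith
    have "n*1 \<le> n*(2*r)" using assms(1) n0 by (intro mult_left_mono) auto
    hence "n \<le> 2*n*r" by (simp add: algebra_simps)
    thus ?thesis using assms by (simp add: pos_divide_le_eq abs_minus_commute)
  qed
  finally have "\<bar>1/r - 1\<bar> \<le> 2 * n" .
  moreover have n0: "n \<ge> 0" using assms(2) by linarith
  ultimately show ?thesis by (simp add: power2_eq_square) (metis mult.assoc mult_right_mono)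
qed

lemma aux5: assumes "(r::real) \<ge> 1/2" "r^2 = 1 + 2*d + q"
  shows "1/r - 1 + d = ((r-1)^2*(r+2) - r*q) / (2*r)"
proof -
  have d: "d = (r^2 - 1 - q)/2" using assms by simp
  show ?thesis using assms(1) unfolding d by (simp add: field_simps power2_eq_square)
qed

lemma proj_bound:
  fixes mu k :: "real^'n"
  assumes mu: "norm mu = 1"
  shows "norm (sph_proj (mu + k) - mu - tanproj mu *v k) \<le> 10 * norm k ^ 2"
proof (cases "norm k \<ge> 1/2")
  case True
  have "norm (sph_proj (mu + k) - mu - tanproj mu *v k) \<le> norm (sph_proj (mu + k)) + norm mu + norm (tanproj mu *v k)"
    by (smt (verit) norm_triangle_ineq4)
  also have "\<dots> \<le> 1 + 1 + norm k" using norm_sph_proj_le[of "mu+k"] norm_tanproj_le[OF mu, of k] mu by linarith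
  also have "\<dots> \<le> 10 * norm k ^ 2" using aux1 True by blast
  finally show ?thesis .
next
  case False
  define r where "r = norm (mu + k)"
  define d where "d = mu \<bullet> k"
  define q where "q = norm k ^ 2"
  have r1: "\<bar>r - 1\<bar> \<le> norm k" unfolding r_def using mu
    using norm_triangle_ineq[of mu k] norm_diff_ineq[of mu k] by linarith
  have rlo: "r \<ge> 1/2" and rhi: "r \<le> 3/2" using r1 False by auto
  have mm: "mu \<bullet> mu = 1" using mu by (simp add: dot_square_norm)
  have rr: "r^2 = 1 + 2 * d + q" unfolding r_def d_def q_def using mm
    by (simp add: power2_norm_eq_inner inner_add_left inner_add_right inner_commute)
  have E: "sph_proj (mu + k) - mu - tanproj mu *v k = (1/r - 1 + d) *\<^sub>R mu + (1/r - 1) *\<^sub>R k"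
  proof -
    have "sph_proj (mu + k) = (1/r) *\<^sub>R (mu + k)" by (simp add: sph_proj_def r_def)
    moreover have "\<And>a. a *\<^sub>R (mu + k) - mu - (k - d *\<^sub>R mu) = (a - 1 + d) *\<^sub>R mu + (a - 1) *\<^sub>R k"
      by (simp add: scaleR_add_right scaleR_diff_left scaleR_add_left)
    ultimately show ?thesis by (simp add: tanproj_vec d_def)
  qed
  have "norm (sph_proj (mu + k) - mu - tanproj mu *v k) \<le> \<bar>1/r - 1 + d\<bar> + \<bar>1/r - 1\<bar> * norm k"
    unfolding E using mu norm_triangle_ineq[of "(1/r - 1 + d) *\<^sub>R mu" "(1/r - 1) *\<^sub>R k"] by simp
  moreover have "1/r - 1 + d = ((r-1)^2*(r+2) - r*q) / (2*r)" using aux5 rlo rr by blast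
  moreover have "\<bar>((r-1)^2*(r+2) - r*q) / (2*r)\<bar> \<le> 5 * q"
    using aux3[OF rlo rhi] aux2[OF r1] q_def by blast
  moreover have "\<bar>1/r - 1\<bar> * norm k \<le> 2 * q" using aux4[OF rlo r1] q_def by blast
  ultimately show ?thesis unfolding q_def by linarith
qed


lemma norm_sq_vec: "norm (x::real^'n)^2 = (\<Sum>i\<in>UNIV. (x$i)^2)"
  unfolding power2_norm_eq_inner inner_vec_def by (simp add: power2_eq_square)

lemma norm_sq_mat: "norm (A::real^'n^'m)^2 = (\<Sum>i\<in>UNIV. norm (A$i)^2)"
  by (simp add: power2_norm_eq_inner inner_vec_def)

lemma norm_mat_vec: "norm ((A::real^'n^'m) *v x) \<le> norm A * norm x"
proof -
  have "norm (A *v x)^2 = (\<Sum>i\<in>UNIV. (A$i \<bullet> x)^2)"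
    by (simp add: norm_sq_vec matrix_mult_dot)
  also have "\<dots> \<le> (\<Sum>i\<in>UNIV. norm (A$i)^2 * norm x^2)"
  proof (rule sum_mono)
    fix i
    have "\<bar>A$i \<bullet> x\<bar> \<le> norm (A$i) * norm x" by (rule Cauchy_Schwarz_ineq2)
    hence "\<bar>A$i \<bullet> x\<bar>^2 \<le> (norm (A$i) * norm x)^2" by (intro power_mono) auto
    thus "(A$i \<bullet> x)^2 \<le> norm (A$i)^2 * norm x^2" by (simp add: power_mult_distrib)
  qed
  also have "\<dots> = (norm A * norm x)^2" by (simp add: norm_sq_mat power_mult_distrib sum_distrib_right)
  finally show ?thesis using power2_le_imp_le by (metis mult_nonneg_nonneg norm_ge_zero)
qed


lemma bdd_integrable:
  assumes "prob_space M" "g \<in> borel_measurable M" "\<And>x. x \<in> space M \<Longrightarrow> \<bar>g x\<bar> \<le> (C::real)"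
  shows "integrable M g"
proof -
  interpret prob_space M by fact
  show ?thesis using assms(2,3) by (intro integrable_const_bound[where B=C]) auto
qed

lemma tight_lemma:
  fixes X :: "nat \<Rightarrow> 'a \<Rightarrow> 'b::euclidean_space"
  assumes M: "\<And>n. prob_space (M n)" and X: "\<And>n. X n \<in> borel_measurable (M n)"
    and L: "prob_space L" "sets L = sets borel" and conv: "conv_distr M X L" and e: "e > 0"
  shows "\<exists>K\<ge>0. eventually (\<lambda>n. measure (M n) {\<omega> \<in> space (M n). norm (X n \<omega>) > K} < e) sequentially"
proof -
  interpret L: prob_space L by fact
  define A where "A k = {z::'b. norm z > real k}" for k
  have Ab: "A k \<in> sets borel" for k unfolding A_def by (intro borel_open open_Collect_less continuous_intros)
  have Asets: "range A \<subseteq> sets L" using L(2) Ab by blast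
  have "decseq A" unfolding A_def decseq_def by auto
  moreover have "(\<Inter>i. A i) = {}"
  proof -
    have "\<exists>k. z \<notin> A k" for z :: 'b
    proof -
      obtain k where "norm z \<le> real k" using real_arch_simple by blast
      thus ?thesis unfolding A_def by (intro exI[of _ k]) auto
    qed
    thus ?thesis by blast
  qed
  ultimately have "(\<lambda>k. measure L (A k)) \<longlonglongrightarrow> 0" using L.finite_Lim_measure_decseq[OF Asets] by simp
  hence "eventually (\<lambda>k. measure L (A k) < e/2) sequentially" using e by (intro order_tendstoD(2)) auto
  then obtain K0 where K0: "measure L (A K0) < e/2" unfolding eventually_sequentially by blast
  define f where "f z = min 1 (max 0 (norm z - real K0))" for z :: 'b
  have fc: "continuous_on UNIV f" unfolding f_def by (intro continuous_intros)
  have fb: "bounded (range f)" unfolding f_def bounded_iff by (intro exI[of _ 1]) auto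
  have fm: "f \<in> borel_measurable borel" using fc by (simp add: borel_measurable_continuous_onI)
  have lim: "(\<lambda>n. \<integral>\<omega>. f (X n \<omega>) \<partial>M n) \<longlonglongrightarrow> (\<integral>z. f z \<partial>L)"
    using conv fc fb unfolding conv_distr_def by blast
  have fL: "(\<integral>z. f z \<partial>L) \<le> measure L (A K0)"
  proof -
    have "(\<integral>z. f z \<partial>L) \<le> (\<integral>z. indicator (A K0) z \<partial>L)"
      apply (rule integral_mono)
      apply (rule bdd_integrable[where C=1])
      apply (rule L)
      using fm L(2) apply (simp add: measurable_def)
      apply (simp add: f_def)
      apply (rule bdd_integrable[where C=1])
      apply (rule L)
      using Asets apply (simp)
      apply (simp add: indicator_def)
      by (simp add: f_def A_def indicator_def)
    thus ?thesis using Asets by simp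
  qed
  have ev: "eventually (\<lambda>n. (\<integral>\<omega>. f (X n \<omega>) \<partial>M n) < e) sequentially"
  proof -
    have "(\<integral>z. f z \<partial>L) < e" using fL K0 e by linarith
    thus ?thesis using order_tendstoD(2)[OF lim] by blast
  qed
  show ?thesis
  proof (rule exI[of _ "real K0 + 1"], rule conjI, simp, rule eventually_mono[OF ev])
    fix n assume h: "(\<integral>\<omega>. f (X n \<omega>) \<partial>M n) < e"
    interpret Mn: prob_space "M n" by (rule M)
    have Xn[measurable]: "X n \<in> borel_measurable (M n)" by (rule X)
    have S: "{\<omega> \<in> space (M n). norm (X n \<omega>) > real K0 + 1} \<in> sets (M n)" by measurable
    have "measure (M n) {\<omega> \<in> space (M n). norm (X n \<omega>) > real K0 + 1}
        = (\<integral>\<omega>. indicator {\<omega> \<in> space (M n). norm (X n \<omega>) > real K0 + 1} \<omega> \<partial>M n)"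
      by (simp add: Int_absorb2)
    also have "\<dots> \<le> (\<integral>\<omega>. f (X n \<omega>) \<partial>M n)"
      apply (rule integral_mono)
      apply (rule bdd_integrable[where C=1])
      apply (rule M)
      using S apply simp
      apply (simp add: indicator_def)
      apply (rule bdd_integrable[where C=1])
      apply (rule M)
      using fm X apply simp
      apply (simp add: f_def)
      by (simp add: f_def indicator_def)
    finally show "measure (M n) {\<omega> \<in> space (M n). norm (X n \<omega>) > real K0 + 1} < e" using h by linarith
  qed
qed


lemma mv_meas: "(\<lambda>z. (B::real^'n^'m) *v z) \<in> borel_measurable borel"
  by (intro borel_measurable_continuous_onI continuous_intros)

lemma mv_comp[measurable (raw)]: "X \<in> borel_measurable M \<Longrightarrow> (\<lambda>\<omega>. (B::real^'n^'m) *v X \<omega>) \<in> borel_measurable M"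
  by (rule measurable_compose[OF _ mv_meas])

lemma test_meas:
  fixes X :: "'a \<Rightarrow> real^'n" and R :: "'a \<Rightarrow> real^'m" and f :: "real^'m \<Rightarrow> real"
  assumes X: "X \<in> borel_measurable M" and R: "R \<in> borel_measurable M" and f: "f \<in> borel_measurable borel"
  shows "(\<lambda>\<omega>. f (B *v X \<omega> + R \<omega>) - f (A0 *v X \<omega>)) \<in> borel_measurable M"
  apply (intro borel_measurable_diff measurable_compose[OF _ f] borel_measurable_add)
  using X R mv_comp by auto


lemma abs_integral_le:
  fixes G h :: "'a \<Rightarrow> real"
  assumes "integrable M G" "integrable M h" "\<And>x. x \<in> space M \<Longrightarrow> \<bar>G x\<bar> \<le> h x"
  shows "\<bar>integral\<^sup>L M G\<bar> \<le> integral\<^sup>L M h"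
proof -
  have "integral\<^sup>L M G \<le> integral\<^sup>L M h" using assms by (intro integral_mono) (auto simp: abs_le_iff)
  moreover have "integral\<^sup>L M (\<lambda>x. - G x) \<le> integral\<^sup>L M h" using assms by (intro integral_mono) (auto simp: abs_le_iff)
  ultimately show ?thesis by simp
qed

lemma slutsky:
  fixes M :: "nat \<Rightarrow> 'a measure" and X :: "nat \<Rightarrow> 'a \<Rightarrow> real^'n" and R :: "nat \<Rightarrow> 'a \<Rightarrow> real^'m"
    and A :: "nat \<Rightarrow> real^'n^'m" and A0 :: "real^'n^'m" and L :: "(real^'n) measure"
  assumes M: "\<And>n. prob_space (M n)" and X: "\<And>n. X n \<in> borel_measurable (M n)"
    and R: "\<And>n. R n \<in> borel_measurable (M n)"
    and L: "prob_space L" "sets L = sets borel" and conv: "conv_distr M X L"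
    and Rp: "conv_prob_zero M R" and A: "A \<longlonglongrightarrow> A0"
  shows "conv_distr M (\<lambda>n \<omega>. A n *v X n \<omega> + R n \<omega>) (distr L borel (\<lambda>z. A0 *v z))"
  unfolding conv_distr_def
proof (intro allI impI)
  fix f :: "real^'m \<Rightarrow> real" assume f: "continuous_on UNIV f \<and> bounded (range f)"
  hence fc: "continuous_on UNIV f" and fb: "bounded (range f)" by auto
  obtain C where C: "\<And>x. \<bar>f x\<bar> \<le> C" using fb unfolding bounded_iff by auto
  have C0: "C \<ge> 0" using C[of 0] by linarith
  have fm: "f \<in> borel_measurable borel" using fc by (simp add: borel_measurable_continuous_onI)
  have mL: "(\<lambda>z. A0 *v z) \<in> measurable L borel" using mv_meas L(2) by (simp add: measurable_def)
  have target: "(\<integral>x. f x \<partial>distr L borel (\<lambda>z. A0 *v z)) = (\<integral>z. f (A0 *v z) \<partial>L)"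
    by (rule integral_distr[OF mL fm])
  have gc: "continuous_on UNIV (\<lambda>z. f (A0 *v z))"
    by (rule continuous_on_compose2[OF fc]) (auto intro: continuous_intros)
  have gb: "bounded (range (\<lambda>z. f (A0 *v z)))" by (rule bounded_subset[OF fb]) auto
  have lim1: "(\<lambda>n. \<integral>\<omega>. f (A0 *v X n \<omega>) \<partial>M n) \<longlonglongrightarrow> (\<integral>z. f (A0 *v z) \<partial>L)"
    using conv gc gb unfolding conv_distr_def by blast
  have lim2: "(\<lambda>n. (\<integral>\<omega>. f (A n *v X n \<omega> + R n \<omega>) \<partial>M n) - (\<integral>\<omega>. f (A0 *v X n \<omega>) \<partial>M n)) \<longlonglongrightarrow> 0"
    unfolding tendsto_iff
  proof (intro allI impI)
    fix e :: real assume e: "e > 0"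
    define \<epsilon> where "\<epsilon> = (e/2) / (1 + 4 * C)"
    have \<epsilon>0: "\<epsilon> > 0" unfolding \<epsilon>_def using e C0 by auto
    have pos: "1 + 4 * C > 0" using C0 by linarith
    have "\<epsilon> * (1 + 4 * C) = e/2" unfolding \<epsilon>_def using pos by (simp add: divide_simps)
    hence \<epsilon>e: "\<epsilon> * (1 + 4 * C) < e" using e by linarith
    obtain K where K0: "K \<ge> 0" and evK: "eventually (\<lambda>n. measure (M n) {\<omega> \<in> space (M n). norm (X n \<omega>) > K} < \<epsilon>) sequentially"
      using tight_lemma[OF M X L conv \<epsilon>0] by blast
    define \<rho> where "\<rho> = norm A0 * K + 1"
    have uc: "uniformly_continuous_on (cball 0 (\<rho>+1)) f"
      by (rule compact_uniformly_continuous[OF continuous_on_subset[OF fc] compact_cball]) auto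
    obtain \<delta> where \<delta>0: "\<delta> > 0" and \<delta>: "\<And>x x'. x \<in> cball 0 (\<rho>+1) \<Longrightarrow> x' \<in> cball 0 (\<rho>+1) \<Longrightarrow> dist x' x < \<delta> \<Longrightarrow> dist (f x') (f x) < \<epsilon>"
      using uc \<epsilon>0 unfolding uniformly_continuous_on_def by metis
    define \<delta>' where "\<delta>' = min \<delta> 1"
    have \<delta>'0: "\<delta>' > 0" using \<delta>0 unfolding \<delta>'_def by auto
    have "(\<lambda>n. norm (A n - A0) * K) \<longlonglongrightarrow> 0 * K"
      by (intro tendsto_mult tendsto_const) (use A in \<open>simp add: LIM_zero tendsto_norm_zero\<close>)
    hence ev1: "eventually (\<lambda>n. norm (A n - A0) * K < \<delta>'/2) sequentially"
      using \<delta>'0 by (intro order_tendstoD(2)) auto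
    have ev2: "eventually (\<lambda>n. measure (M n) {\<omega> \<in> space (M n). norm (R n \<omega>) > \<delta>'/2} < \<epsilon>) sequentially"
    proof -
      have "(\<lambda>n. measure (M n) {\<omega> \<in> space (M n). norm (R n \<omega>) > \<delta>'/2}) \<longlonglongrightarrow> 0"
        using Rp \<delta>'0 half_gt_zero[OF \<delta>'0] unfolding conv_prob_zero_def by blast
      thus ?thesis using \<epsilon>0 by (rule order_tendstoD(2))
    qed
    show "eventually (\<lambda>n. dist ((\<integral>\<omega>. f (A n *v X n \<omega> + R n \<omega>) \<partial>M n) - (\<integral>\<omega>. f (A0 *v X n \<omega>) \<partial>M n)) 0 < e) sequentially"
    proof (rule eventually_mono[OF eventually_conj[OF evK eventually_conj[OF ev1 ev2]]])
      fix n assume hn: "measure (M n) {\<omega> \<in> space (M n). norm (X n \<omega>) > K} < \<epsilon> \<and>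
        norm (A n - A0) * K < \<delta>'/2 \<and> measure (M n) {\<omega> \<in> space (M n). norm (R n \<omega>) > \<delta>'/2} < \<epsilon>"
      interpret Mn: prob_space "M n" by (rule M)
      define B1 where "B1 = {\<omega> \<in> space (M n). norm (X n \<omega>) > K}"
      define B2 where "B2 = {\<omega> \<in> space (M n). norm (R n \<omega>) > \<delta>'/2}"
      define G where "G \<omega> = f (A n *v X n \<omega> + R n \<omega>) - f (A0 *v X n \<omega>)" for \<omega>
      define h where "h \<omega> = \<epsilon> + 2 * C * indicator B1 \<omega> + 2 * C * indicator B2 \<omega>" for \<omega>
      have Xn[measurable]: "X n \<in> borel_measurable (M n)" by (rule X)
      have Rn[measurable]: "R n \<in> borel_measurable (M n)" by (rule R)
      have B1m: "B1 \<in> sets (M n)" unfolding B1_def by measurable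
      have B2m: "B2 \<in> sets (M n)" unfolding B2_def by measurable
      have pt: "\<bar>G \<omega>\<bar> \<le> h \<omega>" if \<omega>: "\<omega> \<in> space (M n)" for \<omega>
      proof (cases "\<omega> \<in> B1 \<or> \<omega> \<in> B2")
        case True
        have "\<bar>G \<omega>\<bar> \<le> 2 * C" unfolding G_def using C[of "A n *v X n \<omega> + R n \<omega>"] C[of "A0 *v X n \<omega>"] by linarith
        thus ?thesis using True C0 unfolding h_def using \<epsilon>0 by (auto simp: indicator_def)
      next
        case False
        hence nX: "norm (X n \<omega>) \<le> K" and nR: "norm (R n \<omega>) \<le> \<delta>'/2" using \<omega> unfolding B1_def B2_def by auto
        define x where "x = A0 *v X n \<omega>"
        define y where "y = A n *v X n \<omega> + R n \<omega>"
        have nx: "norm x \<le> \<rho>" unfolding x_def \<rho>_def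
          using norm_mat_vec[of A0 "X n \<omega>"] mult_left_mono[OF nX norm_ge_zero[of A0]] by linarith
        have "y - x = (A n - A0) *v X n \<omega> + R n \<omega>" unfolding x_def y_def by (simp add: matrix_vector_mult_diff_rdistrib)
        hence "norm (y - x) \<le> norm (A n - A0) * norm (X n \<omega>) + norm (R n \<omega>)"
          using norm_mat_vec[of "A n - A0" "X n \<omega>"] norm_triangle_ineq[of "(A n - A0) *v X n \<omega>" "R n \<omega>"] by simp
        also have "\<dots> \<le> norm (A n - A0) * K + \<delta>'/2" using nR mult_left_mono[OF nX norm_ge_zero[of "A n - A0"]] by linarith
        also have "\<dots> < \<delta>'" using hn by linarith
        finally have dyx: "norm (y - x) < \<delta>'" .
        have ny: "norm y \<le> \<rho> + 1" using nx dyx norm_triangle_ineq[of x "y - x"] unfolding \<delta>'_def by auto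
        have "dist (f y) (f x) < \<epsilon>" using \<delta>[of x y] nx ny dyx unfolding \<delta>'_def by (auto simp: dist_norm)
        hence "\<bar>G \<omega>\<bar> < \<epsilon>" unfolding G_def x_def y_def by (simp add: dist_real_def)
        thus ?thesis unfolding h_def using False by (simp add: indicator_def)
      qed
      have Gm: "G \<in> borel_measurable (M n)" unfolding G_def by (rule test_meas[OF X R fm])
      have Gb: "\<bar>G x\<bar> \<le> 2*C" for x unfolding G_def using C[of "A n *v X n x + R n x"] C[of "A0 *v X n x"] by linarith
      have Gi: "integrable (M n) G" using bdd_integrable[OF M Gm, of "2*C"] Gb by blast
      have i1: "integrable (M n) (indicator B1 :: _ \<Rightarrow> real)" using B1m by (intro integrable_real_indicator) (auto simp: Mn.emeasure_eq_measure)
      have i2: "integrable (M n) (indicator B2 :: _ \<Rightarrow> real)" using B2m by (intro integrable_real_indicator) (auto simp: Mn.emeasure_eq_measure)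
      have hi: "integrable (M n) h" unfolding h_def
        using i1 i2 by auto
      have "\<bar>integral\<^sup>L (M n) G\<bar> \<le> integral\<^sup>L (M n) h" by (rule abs_integral_le[OF Gi hi pt])
      also have "integral\<^sup>L (M n) h = \<epsilon> + 2 * C * measure (M n) B1 + 2 * C * measure (M n) B2"
      proof -
        have "integral\<^sup>L (M n) h = integral\<^sup>L (M n) (\<lambda>\<omega>. \<epsilon> + 2 * C * indicator B1 \<omega>) + integral\<^sup>L (M n) (\<lambda>\<omega>. 2 * C * indicator B2 \<omega>)"
          unfolding h_def by (rule Bochner_Integration.integral_add) (use i1 i2 in auto)
        also have "integral\<^sup>L (M n) (\<lambda>\<omega>. \<epsilon> + 2 * C * indicator B1 \<omega>) = integral\<^sup>L (M n) (\<lambda>\<omega>. \<epsilon>) + integral\<^sup>L (M n) (\<lambda>\<omega>. 2 * C * indicator B1 \<omega>)"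
          by (rule Bochner_Integration.integral_add) (use i1 in auto)
        also have "integral\<^sup>L (M n) (\<lambda>\<omega>. 2 * C * indicator B1 \<omega>) = 2 * C * measure (M n) B1"
          using B1m by (simp add: Int_absorb2 B1_def)
        also have "integral\<^sup>L (M n) (\<lambda>\<omega>. 2 * C * indicator B2 \<omega>) = 2 * C * measure (M n) B2"
          using B2m by (simp add: Int_absorb2 B2_def)
        finally show ?thesis by (simp add: Mn.prob_space)
      qed
      also have "\<dots> \<le> \<epsilon> + 2 * C * \<epsilon> + 2 * C * \<epsilon>"
        using hn C0 unfolding B1_def B2_def by (intro add_mono mult_left_mono) auto
      also have "\<dots> < e" using \<epsilon>e by (simp add: algebra_simps)
      finally have "\<bar>integral\<^sup>L (M n) G\<bar> < e" .
      moreover have "integral\<^sup>L (M n) G = (\<integral>\<omega>. f (A n *v X n \<omega> + R n \<omega>) \<partial>M n) - (\<integral>\<omega>. f (A0 *v X n \<omega>) \<partial>M n)"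
      proof -
        have m1: "(\<lambda>\<omega>. f (A n *v X n \<omega> + R n \<omega>)) \<in> borel_measurable (M n)"
          by (intro measurable_compose[OF _ fm] borel_measurable_add mv_comp X R)
        have m2: "(\<lambda>\<omega>. f (A0 *v X n \<omega>)) \<in> borel_measurable (M n)"
          by (intro measurable_compose[OF _ fm] mv_comp X)
        have "integrable (M n) (\<lambda>\<omega>. f (A n *v X n \<omega> + R n \<omega>))" using bdd_integrable[OF M m1] C by blast
        moreover have "integrable (M n) (\<lambda>\<omega>. f (A0 *v X n \<omega>))" using bdd_integrable[OF M m2] C by blast
        ultimately show ?thesis unfolding G_def by (rule Bochner_Integration.integral_diff)
      qed
      ultimately show "dist ((\<integral>\<omega>. f (A n *v X n \<omega> + R n \<omega>) \<partial>M n) - (\<integral>\<omega>. f (A0 *v X n \<omega>) \<partial>M n)) 0 < e"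
        by (simp add: dist_real_def)
    qed
  qed
  have "(\<lambda>n. \<integral>\<omega>. f (A n *v X n \<omega> + R n \<omega>) \<partial>M n) \<longlonglongrightarrow> 0 + (\<integral>z. f (A0 *v z) \<partial>L)"
    using tendsto_add[OF lim2 lim1] by simp
  thus "(\<lambda>n. \<integral>\<omega>. f (A n *v X n \<omega> + R n \<omega>) \<partial>M n) \<longlonglongrightarrow> (\<integral>x. f x \<partial>distr L borel (\<lambda>z. A0 *v z))"
    using target by simp
qed


lemma inner_transpose_mv: "(transpose A *v x) \<bullet> y = x \<bullet> ((A::real^'n^'m) *v y)"
  by (simp add: dot_lmul_matrix)

lemma transpose_add': "transpose (A + B) = transpose A + transpose (B::real^'n^'m)"
  by (simp add: transpose_def vec_eq_iff)

declare transpose_matrix_vector[simp del] vector_transpose_matrix[simp del]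

lemma kernel_lemma:
  fixes A :: "real^'n^'n" and \<nu> :: "real^'n"
  assumes AA: "A ** transpose A = tanproj \<nu>" and nu: "norm \<nu> = 1"
  shows "\<exists>U. orthogonal_matrix U \<and> A = tanproj \<nu> ** U"
proof -
  have tnu: "tanproj \<nu> *v \<nu> = 0" by (rule tanproj_mu[OF nu])
  have ATn: "transpose A *v \<nu> = 0"
  proof -
    have "(transpose A *v \<nu>) \<bullet> (transpose A *v \<nu>) = \<nu> \<bullet> (A *v (transpose A *v \<nu>))"
      by (rule inner_transpose_mv)
    also have "\<dots> = \<nu> \<bullet> ((A ** transpose A) *v \<nu>)" by (simp add: matrix_vector_mul_assoc)
    also have "\<dots> = 0" using AA tnu by simp
    finally show ?thesis by simp
  qed
  have nuA: "\<nu> \<bullet> (A *v x) = 0" for x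
    using inner_transpose_mv[of A \<nu> x] ATn by simp
  have tA: "tanproj \<nu> ** A = A"
    unfolding matrix_eq by (simp add: matrix_vector_mul_assoc[symmetric] tanproj_vec nuA)
  obtain w where w0: "w \<noteq> 0" and Aw: "A *v w = 0"
  proof -
    have "\<not> (\<forall>x. A *v x = 0 \<longrightarrow> x = 0)"
    proof
      assume "\<forall>x. A *v x = 0 \<longrightarrow> x = 0"
      then obtain B where "B ** A = mat 1" using matrix_left_invertible_ker by blast
      hence "A ** B = mat 1" using matrix_left_right_inverse by blast
      hence "transpose B ** transpose A = mat 1" by (metis matrix_transpose_mul transpose_mat)
      hence "\<nu> = transpose B *v (transpose A *v \<nu>)" by (simp add: matrix_vector_mul_assoc)
      hence "\<nu> = 0" using ATn by simp
      thus False using nu by simp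
    qed
    thus ?thesis using that by blast
  qed
  define u where "u = (1 / norm w) *\<^sub>R w"
  have uu: "u \<bullet> u = 1" unfolding u_def using w0 by (simp add: dot_square_norm power2_eq_square)
  have Au: "A *v u = 0" unfolding u_def by (simp add: matrix_vector_mult_scaleR Aw)
  define U where "U = A + outer \<nu> u"
  have Uv: "U *v y = A *v y + (u \<bullet> y) *\<^sub>R \<nu>" for y
    unfolding U_def by (simp add: matrix_vector_mult_add_rdistrib outer_mult_vec)
  have UTv: "transpose U *v x = transpose A *v x + (\<nu> \<bullet> x) *\<^sub>R u" for x
  proof -
    have "transpose U = transpose A + outer u \<nu>" unfolding U_def
      by (simp only: transpose_add' transpose_outer)
    thus ?thesis by (simp add: matrix_vector_mult_add_rdistrib outer_mult_vec)
  qed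
  have "U ** transpose U = mat 1"
    unfolding matrix_eq
  proof
    fix x
    have uAT: "u \<bullet> (transpose A *v x) = 0"
      using inner_transpose_mv[of A x u] Au by (simp add: inner_commute)
    have "(U ** transpose U) *v x = U *v (transpose U *v x)" by (simp add: matrix_vector_mul_assoc)
    also have "\<dots> = A *v (transpose A *v x) + (\<nu> \<bullet> x) *\<^sub>R \<nu>"
      by (simp add: Uv UTv matrix_vector_right_distrib matrix_vector_mult_scaleR Au uAT inner_add_right uu)
    also have "A *v (transpose A *v x) = tanproj \<nu> *v x" using AA by (simp add: matrix_vector_mul_assoc)
    also have "tanproj \<nu> *v x + (\<nu> \<bullet> x) *\<^sub>R \<nu> = x" by (simp add: tanproj_vec)
    finally show "(U ** transpose U) *v x = mat 1 *v x" by simp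
  qed
  hence oU: "orthogonal_matrix U" unfolding orthogonal_matrix_def using matrix_left_right_inverse by blast
  have "tanproj \<nu> ** U = A"
    unfolding matrix_eq
  proof
    fix x
    have "(tanproj \<nu> ** U) *v x = tanproj \<nu> *v (U *v x)" by (simp add: matrix_vector_mul_assoc)
    also have "\<dots> = (tanproj \<nu> ** A) *v x" 
      by (simp add: Uv matrix_vector_right_distrib matrix_vector_mult_scaleR tnu matrix_vector_mul_assoc)
    finally show "(tanproj \<nu> ** U) *v x = A *v x" using tA by simp
  qed
  thus ?thesis using oU by metis
qed


lemma refl_lemma:
  fixes W :: "real^'n^'n" and \<nu> e z :: "real^'n"
  assumes sym: "transpose W = W" and inv: "W ** W = mat 1" and We: "W *v e = \<nu>" and nu: "norm \<nu> = 1"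
  shows "norm (tanproj \<nu> *v z)^2 = norm (W *v z)^2 - ((W *v z) \<bullet> e)^2"
proof -
  have "(W *v z) \<bullet> e = z \<bullet> (W *v e)" using inner_transpose_mv[of W z e] sym by simp
  hence 1: "(W *v z) \<bullet> e = \<nu> \<bullet> z" using We by (simp add: inner_commute)
  have "(W *v z) \<bullet> (W *v z) = z \<bullet> (W *v (W *v z))" using inner_transpose_mv[of W z "W *v z"] sym by simp
  also have "\<dots> = z \<bullet> z" using inv by (simp add: matrix_vector_mul_assoc)
  finally have 2: "norm (W *v z)^2 = norm z^2" by (simp add: power2_norm_eq_inner)
  show ?thesis using norm_tanproj_sq[OF nu, of z] 1 2 by simp
qed

lemma householder:
  fixes \<nu> :: "real^'n::{finite,wellorder}"
  assumes nu: "norm \<nu> = 1"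
  shows "\<exists>W. orthogonal_matrix W \<and> (\<forall>z. norm (tanproj \<nu> *v z)^2 = (\<Sum>i\<in>UNIV - {Max UNIV}. ((W *v z)$i)^2))"
proof -
  define e where "e = (axis (Max UNIV) 1 :: real^'n::{finite,wellorder})"
  have ne: "norm e = 1" unfolding e_def by simp
  have key: "\<exists>W. transpose W = W \<and> W ** W = mat 1 \<and> W *v e = \<nu>"
  proof (cases "\<nu> = e")
    case True thus ?thesis by (intro exI[of _ "mat 1"]) simp
  next
    case False
    define w where "w = \<nu> - e"
    define c where "c = 2 / (w \<bullet> w)"
    have ww0: "w \<bullet> w > 0" using False unfolding w_def by simp
    have nn: "\<nu> \<bullet> \<nu> = 1" "e \<bullet> e = 1" using nu ne by (simp_all add: dot_square_norm)
    have wwe: "w \<bullet> w = - 2 * (w \<bullet> e)" unfolding w_def using nn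
      by (simp add: inner_diff_left inner_diff_right inner_commute)
    define W where "W = mat 1 - c *\<^sub>R outer w w"
    have Wv: "W *v x = x - (c * (w \<bullet> x)) *\<^sub>R w" for x
      unfolding W_def by (simp add: matrix_vector_mult_diff_rdistrib scaleR_matrix_vector_assoc[symmetric] outer_mult_vec)
    have sym: "transpose W = W" unfolding W_def
      by (simp add: transpose_def vec_eq_iff outer_def mat_def mult.commute)
    have cw: "c * (w \<bullet> w) = 2" unfolding c_def using ww0 by simp
    have inv: "W ** W = mat 1" unfolding matrix_eq
    proof
      fix x
      have "(W ** W) *v x = W *v (W *v x)" by (simp add: matrix_vector_mul_assoc)
      also have "\<dots> = x"
      proof -
        define a where "a = c * (w \<bullet> x)"
        have "w \<bullet> (W *v x) = w \<bullet> x - a * (w \<bullet> w)" unfolding Wv a_def by (simp add: inner_diff_right)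
        also have "a * (w \<bullet> w) = 2 * (w \<bullet> x)" unfolding a_def using cw by (metis mult.commute mult.left_commute)
        finally have "w \<bullet> (W *v x) = - (w \<bullet> x)" by simp
        thus ?thesis unfolding Wv[of "W *v x"] by (simp add: Wv a_def)
      qed
      finally show "(W ** W) *v x = mat 1 *v x" by simp
    qed
    have "W *v e = \<nu>" unfolding Wv
    proof -
      have "c * (w \<bullet> e) = -1" using cw wwe ww0 unfolding c_def by (simp add: field_simps)
      thus "e - (c * (w \<bullet> e)) *\<^sub>R w = \<nu>" unfolding w_def by simp
    qed
    thus ?thesis using sym inv by blast
  qed
  then obtain W where W: "transpose W = W" "W ** W = mat 1" "W *v e = \<nu>" by blast
  have oW: "orthogonal_matrix W" unfolding orthogonal_matrix using W(1,2) by simp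
  have "norm (tanproj \<nu> *v z)^2 = (\<Sum>i\<in>UNIV - {Max UNIV}. ((W *v z)$i)^2)" for z
  proof -
    have "(\<Sum>i\<in>UNIV - {Max UNIV}. ((W *v z)$i)^2) = (\<Sum>i\<in>UNIV. ((W *v z)$i)^2) - ((W *v z)$(Max UNIV))^2"
      by (simp add: sum_diff1)
    also have "\<dots> = norm (W *v z)^2 - ((W *v z) \<bullet> e)^2" unfolding e_def by (simp add: norm_sq_vec inner_axis)
    finally show ?thesis using refl_lemma[OF W nu, of z] by simp
  qed
  thus ?thesis using oW by blast
qed

lemma spherical_integral:
  fixes L :: "(real^'n) measure" and g :: "real^'n \<Rightarrow> real"
  assumes sph: "spherical L" and L: "sets L = sets borel" and U: "orthogonal_matrix U"
    and g: "g \<in> borel_measurable borel"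
  shows "(\<integral>z. g (U *v z) \<partial>L) = (\<integral>z. g z \<partial>L)"
proof -
  have mL: "(\<lambda>z. U *v z) \<in> measurable L borel" using mv_meas L by (simp add: measurable_def)
  have "(\<integral>z. g z \<partial>distr L borel (\<lambda>z. U *v z)) = (\<integral>z. g (U *v z) \<partial>L)"
    by (rule integral_distr[OF mL g])
  moreover have "distr L borel (\<lambda>z. U *v z) = L" using sph U unfolding spherical_def by blast
  ultimately show ?thesis by simp
qed

lemma subseq_principle:
  fixes x :: "nat \<Rightarrow> real"
  assumes sub: "\<And>r::nat\<Rightarrow>nat. strict_mono r \<Longrightarrow> \<exists>s::nat\<Rightarrow>nat. strict_mono s \<and> (\<lambda>n. x (r (s n))) \<longlonglongrightarrow> c"
  shows "x \<longlonglongrightarrow> c"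
proof (rule ccontr)
  assume "\<not> x \<longlonglongrightarrow> c"
  then obtain \<epsilon> where "\<epsilon> > 0" and "infinite {n. \<not> dist (x n) c < \<epsilon>}"
    by (auto simp: tendsto_iff not_eventually INFM_iff_infinite cofinite_eq_sequentially[symmetric])
  then obtain r :: "nat \<Rightarrow> nat" where r: "\<And>n. \<not> dist (x (r n)) c < \<epsilon>" and "strict_mono r"
    using enumerate_in_set enumerate_mono by (fastforce simp: strict_mono_def)
  obtain s where "strict_mono s" "(\<lambda>n. x (r (s n))) \<longlonglongrightarrow> c" using sub[OF \<open>strict_mono r\<close>] by blast
  then show False using r \<open>\<epsilon> > 0\<close> by (auto dest: tendstoD)
qed


lemma matrix_inv_props:
  assumes "invertible (B::real^'n^'n)"
  shows "B ** matrix_inv B = mat 1" "matrix_inv B ** B = mat 1"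
proof -
  have "B ** matrix_inv B = mat 1 \<and> matrix_inv B ** B = mat 1"
    unfolding matrix_inv_def by (rule someI_ex) (use assms in \<open>auto simp: invertible_def\<close>)
  thus "B ** matrix_inv B = mat 1" "matrix_inv B ** B = mat 1" by auto
qed

lemma norm_AAT_bound:
  fixes A :: "real^'n^'n"
  assumes AA: "A ** transpose A = tanproj \<nu>"
  shows "norm A \<le> real CARD('n)"
proof -
  have "norm (A$i)^2 = (A ** transpose A)$i$i" for i
    by (simp only: norm_sq_vec) (simp add: matrix_matrix_mult_def transpose_def power2_eq_square)
  also have "\<dots> i \<le> 1" for i using AA by (simp add: tanproj_def outer_def mat_def)
  finally have "norm A^2 \<le> (\<Sum>i\<in>(UNIV::'n set). 1)" unfolding norm_sq_mat by (intro sum_mono) auto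
  hence "norm A^2 \<le> real CARD('n)" by simp
  also have "\<dots> \<le> real CARD('n)^2" by (simp add: power2_eq_square)
  finally show ?thesis using power2_le_imp_le by fastforce
qed

lemma tendsto_AAT: "X \<longlonglongrightarrow> (A0::real^'n^'m) \<Longrightarrow> (\<lambda>n. X n ** transpose (X n)) \<longlonglongrightarrow> A0 ** transpose A0"
  unfolding matrix_matrix_mult_def transpose_def by (intro tendsto_intros)

lemma tendsto_tanproj: "X \<longlonglongrightarrow> (\<nu>::real^'n) \<Longrightarrow> (\<lambda>n. tanproj (X n)) \<longlonglongrightarrow> tanproj \<nu>"
  unfolding tanproj_def outer_def by (intro tendsto_intros)

lemma conv_distr_subseq:
  assumes "conv_distr M X L" "strict_mono r"
  shows "conv_distr (\<lambda>n. M (r n)) (\<lambda>n. X (r n)) L"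
  using assms LIMSEQ_subseq_LIMSEQ unfolding conv_distr_def o_def by blast

lemma conv_prob_zero_subseq:
  assumes "conv_prob_zero M X" "strict_mono r"
  shows "conv_prob_zero (\<lambda>n. M (r n)) (\<lambda>n. X (r n))"
  using assms LIMSEQ_subseq_LIMSEQ unfolding conv_prob_zero_def o_def by blast

lemma core:
  fixes M :: "nat \<Rightarrow> 'a measure" and Z R :: "nat \<Rightarrow> 'a \<Rightarrow> real^'n" and An :: "nat \<Rightarrow> real^'n^'n"
    and mun :: "nat \<Rightarrow> real^'n" and L :: "(real^'n) measure" and r :: "nat \<Rightarrow> nat"
  assumes M: "\<And>n. prob_space (M n)" and Zm: "\<And>n. Z n \<in> borel_measurable (M n)"
    and Rm: "\<And>n. R n \<in> borel_measurable (M n)"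
    and L: "prob_space L" "sets L = sets borel" and conv: "conv_distr M Z L"
    and Rp: "conv_prob_zero M R" and nm: "\<And>n. norm (mun n) = 1"
    and AA: "\<And>n. An n ** transpose (An n) = tanproj (mun n)" and r: "strict_mono r"
  shows "\<exists>(s::nat\<Rightarrow>nat) \<nu> A0. strict_mono s \<and> norm \<nu> = 1 \<and> (\<lambda>n. mun (r (s n))) \<longlonglongrightarrow> \<nu> \<and> A0 ** transpose A0 = tanproj \<nu>
     \<and> conv_distr (\<lambda>n. M (r (s n))) (\<lambda>n \<omega>. An (r (s n)) *v Z (r (s n)) \<omega> + R (r (s n)) \<omega>) (distr L borel (\<lambda>z. A0 *v z))"
proof -
  have sc1: "seq_compact (sphere (0::real^'n) 1)" by (intro compact_imp_seq_compact compact_sphere)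
  have m1: "\<forall>n. (\<lambda>n. mun (r n)) n \<in> sphere 0 1" using nm by simp
  obtain \<nu> s1 where nu: "\<nu> \<in> sphere 0 1" and s1: "strict_mono s1" and l1: "((\<lambda>n. mun (r n)) \<circ> s1) \<longlonglongrightarrow> \<nu>"
    using seq_compactE[of "sphere 0 1" "\<lambda>n. mun (r n)"] sc1 m1 by blast
  have sc2: "seq_compact (cball (0::real^'n^'n) (real CARD('n)))" by (intro compact_imp_seq_compact compact_cball)
  have m2: "\<forall>n. (\<lambda>n. An (r (s1 n))) n \<in> cball 0 (real CARD('n))" using norm_AAT_bound[OF AA] by simp
  obtain A0 s2 where s2: "strict_mono s2" and l2: "((\<lambda>n. An (r (s1 n))) \<circ> s2) \<longlonglongrightarrow> A0"
    using seq_compactE[of "cball 0 (real CARD('n))" "\<lambda>n. An (r (s1 n))"] sc2 m2 by blast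
  define s where "s = s1 \<circ> s2"
  have s: "strict_mono s" unfolding s_def using s1 s2 by (rule strict_mono_o)
  have lmu: "(\<lambda>n. mun (r (s n))) \<longlonglongrightarrow> \<nu>"
    using LIMSEQ_subseq_LIMSEQ[OF l1 s2] unfolding s_def o_def by simp
  have lA: "(\<lambda>n. An (r (s n))) \<longlonglongrightarrow> A0" using l2 unfolding s_def o_def by simp
  have "(\<lambda>n. An (r (s n)) ** transpose (An (r (s n)))) \<longlonglongrightarrow> A0 ** transpose A0" by (rule tendsto_AAT[OF lA])
  moreover have "(\<lambda>n. An (r (s n)) ** transpose (An (r (s n)))) \<longlonglongrightarrow> tanproj \<nu>"
    unfolding AA by (rule tendsto_tanproj[OF lmu])
  ultimately have A0: "A0 ** transpose A0 = tanproj \<nu>" by (rule LIMSEQ_unique)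
  have rs: "strict_mono (r \<circ> s)" using r s by (rule strict_mono_o)
  have cv: "conv_distr (\<lambda>n. M (r (s n))) (\<lambda>n \<omega>. An (r (s n)) *v Z (r (s n)) \<omega> + R (r (s n)) \<omega>) (distr L borel (\<lambda>z. A0 *v z))"
    using slutsky[OF M Zm Rm L conv_distr_subseq[OF conv rs] conv_prob_zero_subseq[OF Rp rs] lA] by (simp add: o_def)
  show ?thesis using s nu lmu A0 cv by (intro exI[of _ s] exI[of _ \<nu>] exI[of _ A0]) auto
qed


lemma sph_proj_meas: "sph_proj \<in> borel_measurable borel"
  unfolding sph_proj_def by measurable

lemma sph_proj_scale: "a > 0 \<Longrightarrow> sph_proj (a *\<^sub>R v) = sph_proj v"
  by (simp add: sph_proj_def)

lemma proj_bound2: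
  fixes t h :: "real^'n"
  assumes t: "t \<noteq> 0"
  shows "norm (sph_proj (t + h) - sph_proj t - (1 / norm t) *\<^sub>R (tanproj (sph_proj t) *v h)) \<le> 10 * norm h ^ 2 / norm t ^ 2"
proof -
  define a where "a = norm t"
  have a: "a > 0" using t unfolding a_def by simp
  define mu where "mu = sph_proj t"
  have mu: "norm mu = 1" using t unfolding mu_def sph_proj_def by simp
  define k where "k = (1/a) *\<^sub>R h"
  have tmu: "t = a *\<^sub>R mu" unfolding mu_def a_def sph_proj_def using a a_def by simp
  have "t + h = a *\<^sub>R (mu + k)" unfolding tmu k_def using a by (simp add: scaleR_add_right)
  hence sp: "sph_proj (t + h) = sph_proj (mu + k)" using sph_proj_scale[OF a] by simp
  have tk: "(1 / norm t) *\<^sub>R (tanproj mu *v h) = tanproj mu *v k"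
    unfolding k_def a_def by (simp add: matrix_vector_mult_scaleR)
  have "norm (sph_proj (t + h) - sph_proj t - (1 / norm t) *\<^sub>R (tanproj (sph_proj t) *v h))
      = norm (sph_proj (mu + k) - mu - tanproj mu *v k)" using sp tk unfolding mu_def by simp
  also have "\<dots> \<le> 10 * norm k ^ 2" by (rule proj_bound[OF mu])
  also have "\<dots> = 10 * norm h ^ 2 / norm t ^ 2" unfolding k_def a_def using a
    by (simp add: power_divide power_mult_distrib a_def)
  finally show ?thesis .
qed

lemma G_tan:
  assumes "norm mu = 1"
  shows "(a *\<^sub>R tanproj mu + b *\<^sub>R (mat 1 - tanproj mu)) *v (tanproj mu *v h) = a *\<^sub>R (tanproj mu *v h)"
  using tanproj_idem[OF assms, of h]
  by (simp add: matrix_vector_mult_add_rdistrib matrix_vector_mult_diff_rdistrib scaleR_matrix_vector_assoc[symmetric])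

lemma G_norm:
  assumes "norm mu = 1"
  shows "norm ((a *\<^sub>R tanproj mu + b *\<^sub>R (mat 1 - tanproj mu)) *v y) \<le> (\<bar>a\<bar> + \<bar>b\<bar>) * norm y"
proof -
  have e: "(a *\<^sub>R tanproj mu + b *\<^sub>R (mat 1 - tanproj mu)) *v y = a *\<^sub>R (tanproj mu *v y) + b *\<^sub>R ((mu \<bullet> y) *\<^sub>R mu)"
    by (simp add: matrix_vector_mult_add_rdistrib matrix_vector_mult_diff_rdistrib scaleR_matrix_vector_assoc[symmetric] tanproj_vec)
  have "norm ((mu \<bullet> y) *\<^sub>R mu) \<le> norm y" using assms Cauchy_Schwarz_ineq2[of mu y] by simp
  hence "\<bar>b\<bar> * norm ((mu \<bullet> y) *\<^sub>R mu) \<le> \<bar>b\<bar> * norm y" by (rule mult_left_mono) simp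
  hence "norm (b *\<^sub>R ((mu \<bullet> y) *\<^sub>R mu)) \<le> \<bar>b\<bar> * norm y" by (simp only: norm_scaleR)
  moreover have "norm (a *\<^sub>R (tanproj mu *v y)) \<le> \<bar>a\<bar> * norm y" using norm_tanproj_le[OF assms, of y] by (simp add: mult_left_mono)
  ultimately show ?thesis unfolding e using norm_triangle_ineq[of "a *\<^sub>R (tanproj mu *v y)" "b *\<^sub>R ((mu \<bullet> y) *\<^sub>R mu)"]
    by (simp add: algebra_simps)
qed

lemma G_sym: "transpose (a *\<^sub>R tanproj mu + b *\<^sub>R (mat 1 - tanproj mu)) = a *\<^sub>R tanproj mu + b *\<^sub>R (mat 1 - tanproj (mu::real^'n))"
  by (simp add: transpose_def vec_eq_iff tanproj_def outer_def mat_def mult.commute)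

lemma opnorm_bound: "norm ((A::real^'n^'m) *v x) \<le> opnorm A * norm x"
  unfolding opnorm_def by (rule onorm[OF matrix_vector_mul_bounded_linear])

lemma opnorm_nonneg: "opnorm (A::real^'n^'m) \<ge> 0"
  unfolding opnorm_def by (rule onorm_pos_le[OF matrix_vector_mul_bounded_linear])

lemma quad_form:
  assumes "transpose G = G"
  shows "d \<bullet> ((G ** transpose Gam ** Gam ** G) *v d) = (Gam *v (G *v d)) \<bullet> (Gam *v (G *v (d::real^'n)))"
proof -
  have "(G ** transpose Gam ** Gam ** G) *v d = G *v (transpose Gam *v (Gam *v (G *v d)))"
    by (simp add: matrix_vector_mul_assoc matrix_mul_assoc)
  hence "d \<bullet> ((G ** transpose Gam ** Gam ** G) *v d) = (transpose G *v d) \<bullet> (transpose Gam *v (Gam *v (G *v d)))"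
    by (simp add: inner_transpose_mv)
  also have "\<dots> = (Gam *v (G *v d)) \<bullet> (Gam *v (G *v d))" using assms
    by (simp add: inner_commute[of "G *v d"] inner_transpose_mv)
  finally show ?thesis .
qed


theorem theorem6p1:
  fixes M :: "nat \<Rightarrow> 'a measure"
    and tt :: "nat \<Rightarrow> 'a \<Rightarrow> real^'s::{finite,wellorder}"
    and t :: "nat \<Rightarrow> real^'s::{finite,wellorder}"
    and B Gam :: "nat \<Rightarrow> real^'s::{finite,wellorder}^'s::{finite,wellorder}"
    and L :: "(real^'s::{finite,wellorder}) measure"
    and eps :: "nat \<Rightarrow> real"
    and D :: real
  defines "Z \<equiv> (\<lambda>n \<omega>. matrix_inv (B n) *v (tt n \<omega> - t n))"
    and "mu \<equiv> (\<lambda>n. sph_proj (t n))"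
    and "mut \<equiv> (\<lambda>n \<omega>. sph_proj (tt n \<omega>))"
    and "G \<equiv> (\<lambda>n. norm (t n) *\<^sub>R tanproj (sph_proj (t n)) + eps n *\<^sub>R (mat 1 - tanproj (sph_proj (t n))))"
  assumes M: "\<And>n. prob_space (M n)"
    and tt_meas: "\<And>n. tt n \<in> borel_measurable (M n)"
    and L: "prob_space L" "sets L = sets borel"
    and B_inv: "\<And>n. invertible (B n)"
    and B_lim: "(\<lambda>n. opnorm (B n)) \<longlonglongrightarrow> 0"
    and Z_lim: "conv_distr M Z L"
    and t_nz: "\<And>n. t n \<noteq> 0"
    and t_dist: "\<And>n. infdist (t n) (sphere 0 1) \<le> D"
    and Bt: "(\<lambda>n. opnorm (B n) / norm (t n)) \<longlonglongrightarrow> 0"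
    and eps_O: "eps \<in> O(\<lambda>n. norm (t n))"
    and Gam_lim: "(\<lambda>n. opnorm (Gam n) * (opnorm (B n))\<^sup>2 / norm (t n)) \<longlonglongrightarrow> 0"
  shows "conv_prob_zero M (\<lambda>n \<omega>. Gam n *v (G n *v (mut n \<omega> - mu n))
                                 - (Gam n ** tanproj (mu n) ** B n) *v Z n \<omega>)
       \<and> ((spherical L \<and>
            (\<forall>n. Gam n ** tanproj (mu n) ** B n ** transpose (B n) ** tanproj (mu n)
                   ** transpose (Gam n) = tanproj (mu n)))
          \<longrightarrow> (\<forall>\<mu>. (mu \<longlonglongrightarrow> \<mu>) \<and> norm \<mu> = 1 \<longrightarrow>
                 conv_distr M (\<lambda>n \<omega>. Gam n *v (G n *v (mut n \<omega> - mu n)))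
                   (distr L borel (\<lambda>z. tanproj \<mu> *v z)))
            \<and> conv_distr M (\<lambda>n \<omega>. (mut n \<omega> - mu n) \<bullet>
                   ((G n ** transpose (Gam n) ** Gam n ** G n) *v (mut n \<omega> - mu n)))
                (zeta2_last_dropped L))"
proof -
  have a0: "\<And>n. norm (t n) > 0" using t_nz by simp
  have mun: "\<And>n. norm (mu n) = 1" unfolding mu_def sph_proj_def using t_nz by simp
  have BZ: "\<And>n \<omega>. B n *v Z n \<omega> = tt n \<omega> - t n"
    unfolding Z_def by (simp add: matrix_vector_mul_assoc matrix_inv_props(1)[OF B_inv])
  have Zm: "\<And>n. Z n \<in> borel_measurable (M n)" unfolding Z_def
    by (intro mv_comp borel_measurable_diff tt_meas borel_measurable_const)
  have mutm: "\<And>n. mut n \<in> borel_measurable (M n)" unfolding mut_def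
    by (rule measurable_compose[OF tt_meas sph_proj_meas])
  have G': "\<And>n. G n = norm (t n) *\<^sub>R tanproj (mu n) + eps n *\<^sub>R (mat 1 - tanproj (mu n))"
    unfolding G_def mu_def by simp
  define An where "An n = Gam n ** tanproj (mu n) ** B n" for n
  define R where "R n \<omega> = Gam n *v (G n *v (mut n \<omega> - mu n)) - An n *v Z n \<omega>" for n \<omega>
  have Rm: "\<And>n. R n \<in> borel_measurable (M n)" unfolding R_def
    by (intro borel_measurable_diff mv_comp Zm borel_measurable_const mutm)
  obtain c where c0: "c > 0" and evc: "eventually (\<lambda>n. norm (eps n) \<le> c * norm (norm (t n))) at_top"
    using eps_O by (elim landau_o.bigE)
  define \<kappa> where "\<kappa> n = opnorm (Gam n) * (opnorm (B n))^2 / norm (t n)" for n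
  have \<kappa>0: "\<And>n. \<kappa> n \<ge> 0" unfolding \<kappa>_def by (intro divide_nonneg_nonneg mult_nonneg_nonneg opnorm_nonneg zero_le_power2 norm_ge_zero)
  have \<kappa>lim: "\<kappa> \<longlonglongrightarrow> 0" unfolding \<kappa>_def using Gam_lim by simp
  have bound: "norm (R n \<omega>) \<le> 10 * (1 + c) * \<kappa> n * norm (Z n \<omega>)^2"
    if ce: "norm (eps n) \<le> c * norm (norm (t n))" for n \<omega>
  proof -
    define a where "a = norm (t n)"
    have a: "a > 0" unfolding a_def using a0 by simp
    define h where "h = B n *v Z n \<omega>"
    have tth: "tt n \<omega> = t n + h" using BZ unfolding h_def by simp
    define D where "D = mut n \<omega> - mu n - (1/a) *\<^sub>R (tanproj (mu n) *v h)"
    have Dle: "norm D \<le> 10 * norm h^2 / a^2" unfolding D_def mut_def mu_def tth a_def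
      using proj_bound2[OF t_nz[of n], of h] by simp
    have Gt: "G n *v ((1/a) *\<^sub>R (tanproj (mu n) *v h)) = tanproj (mu n) *v h"
      unfolding G' using G_tan[OF mun[of n]] a unfolding a_def by (simp add: matrix_vector_mult_scaleR)
    have GD: "G n *v (mut n \<omega> - mu n) = G n *v D + tanproj (mu n) *v h"
      unfolding D_def by (simp add: matrix_vector_mult_diff_distrib Gt)
    have AZ: "An n *v Z n \<omega> = Gam n *v (tanproj (mu n) *v h)"
      unfolding An_def h_def by (simp add: matrix_vector_mul_assoc matrix_mul_assoc)
    have RD: "R n \<omega> = Gam n *v (G n *v D)"
      unfolding R_def GD AZ by (simp add: matrix_vector_right_distrib)
    define g where "g = opnorm (Gam n)"
    define b where "b = opnorm (B n)"
    have g0: "g \<ge> 0" and b0: "b \<ge> 0" unfolding g_def b_def by (simp_all add: opnorm_nonneg)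
    have hb: "norm h \<le> b * norm (Z n \<omega>)" unfolding h_def b_def by (rule opnorm_bound)
    have hb2: "norm h^2 \<le> b^2 * norm (Z n \<omega>)^2"
      using power_mono[OF hb norm_ge_zero, of 2] by (simp add: power_mult_distrib)
    have epsb: "\<bar>eps n\<bar> \<le> c * a" using ce unfolding a_def by simp
    have GDb: "norm (G n *v D) \<le> (1 + c) * a * norm D"
    proof -
      have "norm (G n *v D) \<le> (\<bar>norm (t n)\<bar> + \<bar>eps n\<bar>) * norm D" unfolding G' by (rule G_norm[OF mun])
      also have "\<dots> \<le> (1 + c) * a * norm D" using epsb a unfolding a_def
        by (intro mult_right_mono) (auto simp: algebra_simps)
      finally show ?thesis .
    qed
    have "norm (R n \<omega>) \<le> g * norm (G n *v D)" unfolding RD g_def by (rule opnorm_bound)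
    also have "\<dots> \<le> g * ((1 + c) * a * norm D)" using GDb g0 by (rule mult_left_mono)
    also have "\<dots> \<le> g * ((1 + c) * a * (10 * (b^2 * norm (Z n \<omega>)^2) / a^2))"
    proof -
      have "norm D \<le> 10 * (b^2 * norm (Z n \<omega>)^2) / a^2" using Dle hb2 a
        by (smt (verit) divide_right_mono zero_le_power2)
      thus ?thesis using g0 c0 a by (intro mult_left_mono) auto
    qed
    also have "\<dots> = 10 * (1 + c) * \<kappa> n * norm (Z n \<omega>)^2"
      unfolding \<kappa>_def g_def b_def a_def using a unfolding a_def by (simp add: field_simps power2_eq_square)
    finally show ?thesis .
  qed
  have part1: "conv_prob_zero M R"
    unfolding conv_prob_zero_def
  proof (intro allI impI)
    fix e :: real assume e: "e > 0"
    show "(\<lambda>n. measure (M n) {\<omega> \<in> space (M n). norm (R n \<omega>) > e}) \<longlonglongrightarrow> 0"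
      unfolding tendsto_iff
    proof (intro allI impI)
      fix \<epsilon> :: real assume \<epsilon>: "\<epsilon> > 0"
      obtain K where K0: "K \<ge> 0" and evK: "eventually (\<lambda>n. measure (M n) {\<omega> \<in> space (M n). norm (Z n \<omega>) > K} < \<epsilon>) sequentially"
        using tight_lemma[OF M Zm L Z_lim \<epsilon>] by blast
      have "(\<lambda>n. 10 * (1 + c) * (K^2 + 1) * \<kappa> n) \<longlonglongrightarrow> 10 * (1 + c) * (K^2 + 1) * 0"
        by (intro tendsto_mult tendsto_const \<kappa>lim)
      hence ev2: "eventually (\<lambda>n. 10 * (1 + c) * (K^2 + 1) * \<kappa> n < e) sequentially"
        using e by (intro order_tendstoD(2)) auto
      show "eventually (\<lambda>n. dist (measure (M n) {\<omega> \<in> space (M n). norm (R n \<omega>) > e}) 0 < \<epsilon>) sequentially"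
      proof (rule eventually_mono[OF eventually_conj[OF evK eventually_conj[OF ev2 evc]]])
        fix n assume hn: "measure (M n) {\<omega> \<in> space (M n). norm (Z n \<omega>) > K} < \<epsilon> \<and>
          10 * (1 + c) * (K^2 + 1) * \<kappa> n < e \<and> norm (eps n) \<le> c * norm (norm (t n))"
        interpret Mn: prob_space "M n" by (rule M)
        have Zn[measurable]: "Z n \<in> borel_measurable (M n)" by (rule Zm)
        have sZ: "{\<omega> \<in> space (M n). norm (Z n \<omega>) > K} \<in> sets (M n)" by measurable
        have sub: "{\<omega> \<in> space (M n). norm (R n \<omega>) > e} \<subseteq> {\<omega> \<in> space (M n). norm (Z n \<omega>) > K}"
        proof safe
          fix \<omega> assume \<omega>: "\<omega> \<in> space (M n)" and Re: "norm (R n \<omega>) > e"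
          show "norm (Z n \<omega>) > K"
          proof (rule ccontr)
            assume "\<not> norm (Z n \<omega>) > K"
            hence "norm (Z n \<omega>) \<le> K" by simp
            hence "norm (Z n \<omega>)^2 \<le> K^2" using power_mono[of "norm (Z n \<omega>)" K 2] by simp
            hence zk: "norm (Z n \<omega>)^2 \<le> K^2 + 1" by simp
            have "norm (R n \<omega>) \<le> 10 * (1 + c) * \<kappa> n * norm (Z n \<omega>)^2" using bound hn by blast
            also have "\<dots> \<le> 10 * (1 + c) * \<kappa> n * (K^2 + 1)" using zk c0 \<kappa>0[of n] by (intro mult_left_mono) auto
            also have "\<dots> < e" using hn by (simp add: algebra_simps)
            finally show False using Re by simp
          qed
        qed
        have "measure (M n) {\<omega> \<in> space (M n). norm (R n \<omega>) > e} \<le> measure (M n) {\<omega> \<in> space (M n). norm (Z n \<omega>) > K}"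
          by (rule Mn.finite_measure_mono[OF sub sZ])
        thus "dist (measure (M n) {\<omega> \<in> space (M n). norm (R n \<omega>) > e}) 0 < \<epsilon>" using hn by simp
      qed
    qed
  qed
  have P1: "conv_prob_zero M (\<lambda>n \<omega>. Gam n *v (G n *v (mut n \<omega> - mu n))
                                 - (Gam n ** tanproj (mu n) ** B n) *v Z n \<omega>)"
    using part1 unfolding R_def An_def .
  have sq_meas: "(\<lambda>y::real^'s::{finite,wellorder}. \<Sum>i\<in>UNIV - {Max UNIV}. (y $ i)\<^sup>2) \<in> borel_measurable borel"
    by (intro borel_measurable_continuous_onI continuous_intros)
  have P23: "(spherical L \<and>
            (\<forall>n. Gam n ** tanproj (mu n) ** B n ** transpose (B n) ** tanproj (mu n)
                   ** transpose (Gam n) = tanproj (mu n)))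
          \<longrightarrow> (\<forall>\<mu>. (mu \<longlonglongrightarrow> \<mu>) \<and> norm \<mu> = 1 \<longrightarrow>
                 conv_distr M (\<lambda>n \<omega>. Gam n *v (G n *v (mut n \<omega> - mu n)))
                   (distr L borel (\<lambda>z. tanproj \<mu> *v z)))
            \<and> conv_distr M (\<lambda>n \<omega>. (mut n \<omega> - mu n) \<bullet>
                   ((G n ** transpose (Gam n) ** Gam n ** G n) *v (mut n \<omega> - mu n)))
                (zeta2_last_dropped L)"
  proof (intro impI)
    assume H: "spherical L \<and>
            (\<forall>n. Gam n ** tanproj (mu n) ** B n ** transpose (B n) ** tanproj (mu n)
                   ** transpose (Gam n) = tanproj (mu n))"
    hence sph: "spherical L" and Hid: "\<And>n. Gam n ** tanproj (mu n) ** B n ** transpose (B n) ** tanproj (mu n)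
                   ** transpose (Gam n) = tanproj (mu n)" by auto
    have AA: "\<And>n. An n ** transpose (An n) = tanproj (mu n)"
      unfolding An_def using Hid by (simp add: matrix_transpose_mul matrix_mul_assoc transpose_tanproj)
    have Y: "\<And>n \<omega>. Gam n *v (G n *v (mut n \<omega> - mu n)) = An n *v Z n \<omega> + R n \<omega>" unfolding R_def by simp
    have Gsym: "\<And>n. transpose (G n) = G n" unfolding G' by (rule G_sym)
    have part2: "\<forall>\<mu>. (mu \<longlonglongrightarrow> \<mu>) \<and> norm \<mu> = 1 \<longrightarrow>
                 conv_distr M (\<lambda>n \<omega>. Gam n *v (G n *v (mut n \<omega> - mu n)))
                   (distr L borel (\<lambda>z. tanproj \<mu> *v z))"
    proof (intro allI impI)
      fix \<mu> :: "real^'s::{finite,wellorder}" assume h\<mu>: "(mu \<longlonglongrightarrow> \<mu>) \<and> norm \<mu> = 1"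
      show "conv_distr M (\<lambda>n \<omega>. Gam n *v (G n *v (mut n \<omega> - mu n))) (distr L borel (\<lambda>z. tanproj \<mu> *v z))"
        unfolding conv_distr_def Y
      proof (intro allI impI)
        fix f :: "real^'s::{finite,wellorder} \<Rightarrow> real" assume f: "continuous_on UNIV f \<and> bounded (range f)"
        have fm: "f \<in> borel_measurable borel" using f by (simp add: borel_measurable_continuous_onI)
        have mT: "(\<lambda>z. tanproj \<mu> *v z) \<in> measurable L borel" using mv_meas L(2) by (simp add: measurable_def)
        have tgt: "(\<integral>x. f x \<partial>distr L borel (\<lambda>z. tanproj \<mu> *v z)) = (\<integral>z. f (tanproj \<mu> *v z) \<partial>L)"
          by (rule integral_distr[OF mT fm])
        show "(\<lambda>n. \<integral>\<omega>. f (An n *v Z n \<omega> + R n \<omega>) \<partial>M n) \<longlonglongrightarrow> (\<integral>x. f x \<partial>distr L borel (\<lambda>z. tanproj \<mu> *v z))"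
          unfolding tgt
        proof (rule subseq_principle)
          fix r :: "nat \<Rightarrow> nat" assume r: "strict_mono r"
          obtain s \<nu> A0 where s: "strict_mono s" and nu: "norm \<nu> = 1" and lmu: "(\<lambda>n. mu (r (s n))) \<longlonglongrightarrow> \<nu>"
            and A0: "A0 ** transpose A0 = tanproj \<nu>"
            and cv: "conv_distr (\<lambda>n. M (r (s n))) (\<lambda>n \<omega>. An (r (s n)) *v Z (r (s n)) \<omega> + R (r (s n)) \<omega>) (distr L borel (\<lambda>z. A0 *v z))"
            using core[where mun=mu and An=An, OF M Zm Rm L Z_lim part1 mun AA r] by blast
          have "(\<lambda>n. mu (r (s n))) \<longlonglongrightarrow> \<mu>"
            using LIMSEQ_subseq_LIMSEQ[OF h\<mu>[THEN conjunct1] strict_mono_o[OF r s]] by (simp add: o_def)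
          hence \<nu>\<mu>: "\<nu> = \<mu>" using lmu LIMSEQ_unique by blast
          obtain U where U: "orthogonal_matrix U" and A0U: "A0 = tanproj \<nu> ** U" using kernel_lemma[OF A0 nu] by blast
          have lim: "(\<lambda>n. \<integral>\<omega>. f (An (r (s n)) *v Z (r (s n)) \<omega> + R (r (s n)) \<omega>) \<partial>M (r (s n))) \<longlonglongrightarrow> (\<integral>x. f x \<partial>distr L borel (\<lambda>z. A0 *v z))"
            using cv f unfolding conv_distr_def by blast
          have mA: "(\<lambda>z. A0 *v z) \<in> measurable L borel" using mv_meas L(2) by (simp add: measurable_def)
          have "(\<integral>x. f x \<partial>distr L borel (\<lambda>z. A0 *v z)) = (\<integral>z. f (A0 *v z) \<partial>L)" by (rule integral_distr[OF mA fm])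
          also have "\<dots> = (\<integral>z. f (tanproj \<mu> *v (U *v z)) \<partial>L)" unfolding A0U \<nu>\<mu> by (simp add: matrix_vector_mul_assoc)
          also have "\<dots> = (\<integral>z. f (tanproj \<mu> *v z) \<partial>L)"
            by (rule spherical_integral[OF sph L(2) U, of "\<lambda>z. f (tanproj \<mu> *v z)"]) (rule measurable_compose[OF mv_meas fm])
          finally show "\<exists>s. strict_mono s \<and> (\<lambda>n. (\<lambda>n. \<integral>\<omega>. f (An n *v Z n \<omega> + R n \<omega>) \<partial>M n) (r (s n))) \<longlonglongrightarrow> (\<integral>z. f (tanproj \<mu> *v z) \<partial>L)"
            using lim s by auto
        qed
      qed
    qed
    have Q: "(mut n \<omega> - mu n) \<bullet> ((G n ** transpose (Gam n) ** Gam n ** G n) *v (mut n \<omega> - mu n))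
          = (An n *v Z n \<omega> + R n \<omega>) \<bullet> (An n *v Z n \<omega> + R n \<omega>)" for n \<omega>
      by (simp only: quad_form[OF Gsym[of n]] Y)
    have part3: "conv_distr M (\<lambda>n \<omega>. (mut n \<omega> - mu n) \<bullet>
                   ((G n ** transpose (Gam n) ** Gam n ** G n) *v (mut n \<omega> - mu n))) (zeta2_last_dropped L)"
      unfolding conv_distr_def Q
    proof (intro allI impI)
      fix f :: "real \<Rightarrow> real" assume f: "continuous_on UNIV f \<and> bounded (range f)"
      have fm: "f \<in> borel_measurable borel" using f by (simp add: borel_measurable_continuous_onI)
      define g where "g y = f (y \<bullet> y)" for y :: "real^'s::{finite,wellorder}"
      have gc: "continuous_on UNIV g" unfolding g_def
        by (rule continuous_on_compose2[of UNIV f]) (use f in \<open>auto intro!: continuous_intros\<close>)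
      have gb: "bounded (range g)" unfolding g_def by (rule bounded_subset[of "range f"]) (use f in auto)
      have sqL: "(\<lambda>y::real^'s::{finite,wellorder}. \<Sum>i\<in>UNIV - {Max UNIV}. (y $ i)\<^sup>2) \<in> measurable L borel"
        using sq_meas L(2) by (simp add: measurable_def)
      have tgt: "(\<integral>x. f x \<partial>zeta2_last_dropped L) = (\<integral>z. f (\<Sum>i\<in>UNIV - {Max UNIV}. (z $ i)\<^sup>2) \<partial>L)"
        unfolding zeta2_last_dropped_def by (rule integral_distr[OF sqL fm])
      show "(\<lambda>n. \<integral>\<omega>. f ((An n *v Z n \<omega> + R n \<omega>) \<bullet> (An n *v Z n \<omega> + R n \<omega>)) \<partial>M n) \<longlonglongrightarrow> (\<integral>x. f x \<partial>zeta2_last_dropped L)"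
        unfolding tgt
      proof (rule subseq_principle)
        fix r :: "nat \<Rightarrow> nat" assume r: "strict_mono r"
        obtain s \<nu> A0 where s: "strict_mono s" and nu: "norm \<nu> = 1"
          and A0: "A0 ** transpose A0 = tanproj \<nu>"
          and cv: "conv_distr (\<lambda>n. M (r (s n))) (\<lambda>n \<omega>. An (r (s n)) *v Z (r (s n)) \<omega> + R (r (s n)) \<omega>) (distr L borel (\<lambda>z. A0 *v z))"
          using core[where mun=mu and An=An, OF M Zm Rm L Z_lim part1 mun AA r] by blast
        obtain U where U: "orthogonal_matrix U" and A0U: "A0 = tanproj \<nu> ** U" using kernel_lemma[OF A0 nu] by blast
        obtain W where W: "orthogonal_matrix W" and Wz: "\<And>z. norm (tanproj \<nu> *v z)^2 = (\<Sum>i\<in>UNIV - {Max UNIV}. ((W *v z)$i)^2)"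
          using householder[OF nu] by blast
        have lim: "(\<lambda>n. \<integral>\<omega>. g (An (r (s n)) *v Z (r (s n)) \<omega> + R (r (s n)) \<omega>) \<partial>M (r (s n))) \<longlonglongrightarrow> (\<integral>x. g x \<partial>distr L borel (\<lambda>z. A0 *v z))"
          using cv gc gb unfolding conv_distr_def by blast
        have gm: "g \<in> borel_measurable borel" using gc by (simp add: borel_measurable_continuous_onI)
        have mA: "(\<lambda>z. A0 *v z) \<in> measurable L borel" using mv_meas L(2) by (simp add: measurable_def)
        have hm: "(\<lambda>y::real^'s::{finite,wellorder}. f (\<Sum>i\<in>UNIV - {Max UNIV}. (y $ i)\<^sup>2)) \<in> borel_measurable borel"
          using measurable_compose[OF sq_meas fm] by simp
        have hWm: "(\<lambda>y::real^'s::{finite,wellorder}. f (\<Sum>i\<in>UNIV - {Max UNIV}. ((W *v y) $ i)\<^sup>2)) \<in> borel_measurable borel"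
          using measurable_compose[OF mv_meas[of W] hm] by simp
        have "(\<integral>x. g x \<partial>distr L borel (\<lambda>z. A0 *v z)) = (\<integral>z. g (A0 *v z) \<partial>L)" by (rule integral_distr[OF mA gm])
        also have "\<dots> = (\<integral>z. f (\<Sum>i\<in>UNIV - {Max UNIV}. ((W *v (U *v z))$i)^2) \<partial>L)"
        proof -
          have "g (A0 *v z) = f (\<Sum>i\<in>UNIV - {Max UNIV}. ((W *v (U *v z))$i)^2)" for z
          proof -
            have "(A0 *v z) \<bullet> (A0 *v z) = norm (tanproj \<nu> *v (U *v z))^2"
              unfolding A0U by (simp add: matrix_vector_mul_assoc power2_norm_eq_inner)
            thus ?thesis unfolding g_def Wz by simp
          qed
          thus ?thesis by simp
        qed
        also have "\<dots> = (\<integral>z. f (\<Sum>i\<in>UNIV - {Max UNIV}. ((W *v z)$i)^2) \<partial>L)"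
          by (rule spherical_integral[OF sph L(2) U hWm])
        also have "\<dots> = (\<integral>z. f (\<Sum>i\<in>UNIV - {Max UNIV}. (z$i)^2) \<partial>L)"
          by (rule spherical_integral[OF sph L(2) W hm])
        finally have eq: "(\<integral>x. g x \<partial>distr L borel (\<lambda>z. A0 *v z)) = (\<integral>z. f (\<Sum>i\<in>UNIV - {Max UNIV}. (z$i)^2) \<partial>L)" .
        show "\<exists>s. strict_mono s \<and> (\<lambda>n. (\<lambda>n. \<integral>\<omega>. f ((An n *v Z n \<omega> + R n \<omega>) \<bullet> (An n *v Z n \<omega> + R n \<omega>)) \<partial>M n) (r (s n))) \<longlonglongrightarrow> (\<integral>z. f (\<Sum>i\<in>UNIV - {Max UNIV}. (z$i)^2) \<partial>L)"
          using lim[unfolded eq] s unfolding g_def by auto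
      qed
    qed
    show "(\<forall>\<mu>. (mu \<longlonglongrightarrow> \<mu>) \<and> norm \<mu> = 1 \<longrightarrow>
                 conv_distr M (\<lambda>n \<omega>. Gam n *v (G n *v (mut n \<omega> - mu n)))
                   (distr L borel (\<lambda>z. tanproj \<mu> *v z)))
            \<and> conv_distr M (\<lambda>n \<omega>. (mut n \<omega> - mu n) \<bullet>
                   ((G n ** transpose (Gam n) ** Gam n ** G n) *v (mut n \<omega> - mu n)))
                (zeta2_last_dropped L)" using part2 part3 by blast
  qed
  show ?thesis using P1 P23 by blast
qed


end
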